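(* Let $L\ge1$ and let $a_{-L-1},\dots,a_{L}$ be positive reals. On the open set of $(x_{-L},\dots,x_{-1},E,x_1,\dots,x_L)\in\mathbb R^{2L+1}$ with all $x_j\ne0$, define $F_L(x_{-L},\dots,x_{-1},E,x_1,\dots,x_L)=(b_{-L},\dots,b_L)$ by $$b_n=\begin{cases}E-a_{n-1}x_{n-1}^{-1}-a_nx_n,& -L\le n<0,\\ E-a_{-1}x_{-1}^{-1}-a_0x_1^{-1},& n=0,\\ E-a_nx_{n+1}^{-1}-a_{n-1}x_n,& 0<n\le L,\end{cases}$$ with the convention $x_{-L-1}^{-1}=x_{L+1}^{-1}=0$. Then the absolute value of the Jacobian determinant of $F_L$ equals $$\Big(\prod_{n=-L}^{L-1}a_n\Big)\Big(1+\sum_{j=1}^{L}\prod_{i=1}^{j}x_i^{-2}+\sum_{j=1}^{L}\prod_{i=1}^{j}x_{-i}^{-2}\Big).$$ Moreover, if $u=(u(-L),\dots,u(L))$ is a normalized ($\sum|u(n)|^2=1$) real eigenvector, with all entries nonzero, of the tridiagonal matrix with diagonal $b_{-L},\dots,b_L$ and off-diagonal entries $a_{-L},\dots,a_{L-1}$, with eigenvalue $E$, and $x_n=u(n+1)/u(n)$ for $n<0$, $x_n=u(n-1)/u(n)$ for $n>0$, then this Jacobian equals $\big(\prod_{n=-L}^{L-1}a_n\big)u(0)^{-2}$, and $F_L(x_{-L},\dots,x_{-1},E,x_1,\dots,x_L)=(b_{-L},\dots,b_L)$. *)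

theory Defs
  imports "HOL-Analysis.Analysis" "Jordan_Normal_Form.Char_Poly"
begin

text \<open>Coordinates of a point of R^(2L+1) are indexed by the integers -L..L;
  coordinate 0 holds E, coordinate n (n \<noteq> 0) holds x_n.\<close>

definition idx :: "nat \<Rightarrow> nat \<Rightarrow> int" where
  "idx L i = int i - int L"

definition xinv :: "nat \<Rightarrow> (int \<Rightarrow> real) \<Rightarrow> int \<Rightarrow> real" where
  "xinv L p k = (if k < - int L \<or> k > int L then 0 else 1 / p k)"

definition FL :: "nat \<Rightarrow> (int \<Rightarrow> real) \<Rightarrow> (int \<Rightarrow> real) \<Rightarrow> int \<Rightarrow> real" where
  "FL L a p n =
     (if n < 0 then p 0 - a (n - 1) * xinv L p (n - 1) - a n * p n
      else if n = 0 then p 0 - a (-1) * xinv L p (-1) - a 0 * xinv L p 1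
      else p 0 - a n * xinv L p (n + 1) - a (n - 1) * p n)"

definition jac_FL :: "nat \<Rightarrow> (int \<Rightarrow> real) \<Rightarrow> (int \<Rightarrow> real) \<Rightarrow> real mat" where
  "jac_FL L a p = mat (2 * L + 1) (2 * L + 1)
     (\<lambda>(i, j). deriv (\<lambda>t. FL L a (p(idx L j := t)) (idx L i)) (p (idx L j)))"

definition tridiag :: "nat \<Rightarrow> (int \<Rightarrow> real) \<Rightarrow> (int \<Rightarrow> real) \<Rightarrow> real mat" where
  "tridiag L a b = mat (2 * L + 1) (2 * L + 1)
     (\<lambda>(i, j). if i = j then b (idx L i)
               else if j = i + 1 then a (idx L i)
               else if i = j + 1 then a (idx L j)
               else 0)"

end

theory Submission
  imports Defs
begin

definition Jf :: "(int \<Rightarrow> real) \<Rightarrow> (int \<Rightarrow> real) \<Rightarrow> int \<Rightarrow> int \<Rightarrow> real" where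
 "Jf a p n m = (if m = 0 then 1
   else if n < 0 then (if m = n then - a n else if m = n - 1 then a (n-1) / (p m)^2 else 0)
   else if n = 0 then (if m = -1 then a (-1) / (p m)^2 else if m = 1 then a 0 / (p m)^2 else 0)
   else (if m = n then - a (n-1) else if m = n+1 then a n / (p m)^2 else 0))"

lemma DERIV_if_const: "(c \<Longrightarrow> (f has_real_derivative D) F) \<Longrightarrow> (\<not>c \<Longrightarrow> (g has_real_derivative D') F) \<Longrightarrow> E = (if c then D else D') \<Longrightarrow> ((\<lambda>x. if c then f x else g x) has_real_derivative E) F"
  by (cases c) auto

lemma FL_deriv:
  assumes n: "- int L \<le> n" "n \<le> int L" and m: "- int L \<le> m" "m \<le> int L"
    and pm: "\<And>k. - int L \<le> k \<Longrightarrow> k \<le> int L \<Longrightarrow> k \<noteq> 0 \<Longrightarrow> p k \<noteq> 0"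
  shows "((\<lambda>t. FL L a (p(m:=t)) n) has_real_derivative Jf a p n m) (at (p m))"
proof -
  consider "m = 0" | "m \<noteq> 0" "n < 0" | "m \<noteq> 0" "n = 0" | "m \<noteq> 0" "n > 0" by linarith
  then show ?thesis
  proof cases
    case 1
    then show ?thesis using n pm
      by (cases "n < 0"; cases "n = 0"; auto simp: FL_def xinv_def Jf_def fun_upd_apply intro!: DERIV_if_const derivative_eq_intros split: if_splits)
  next
    case 2
    then show ?thesis using n m pm
      by (auto simp: FL_def xinv_def Jf_def fun_upd_apply intro!: DERIV_if_const derivative_eq_intros split: if_splits simp: power2_eq_square field_simps)
  next
    case 3
    then show ?thesis using n m pm
      by (auto simp: FL_def xinv_def Jf_def fun_upd_apply intro!: DERIV_if_const derivative_eq_intros split: if_splits simp: power2_eq_square field_simps)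
  next
    case 4
    then show ?thesis using n m pm
      by (auto simp: FL_def xinv_def Jf_def fun_upd_apply intro!: DERIV_if_const derivative_eq_intros split: if_splits simp: power2_eq_square field_simps)
  qed
qed

lemma jac_entry:
  assumes i: "i < 2*L+1" and j: "j < 2*L+1"
    and pm: "\<And>k. - int L \<le> k \<Longrightarrow> k \<le> int L \<Longrightarrow> k \<noteq> 0 \<Longrightarrow> p k \<noteq> 0"
  shows "jac_FL L a p $$ (i,j) = Jf a p (idx L i) (idx L j)"
proof -
  have "jac_FL L a p $$ (i,j) = deriv (\<lambda>t. FL L a (p(idx L j := t)) (idx L i)) (p (idx L j))"
    using i j by (simp add: jac_FL_def)
  also have "\<dots> = Jf a p (idx L i) (idx L j)"
    by (rule DERIV_imp_deriv, rule FL_deriv, insert i j pm, auto simp: idx_def)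
  finally show ?thesis .
qed

definition sg :: "nat \<Rightarrow> nat \<Rightarrow> nat" where
  "sg L k = (if k < L then k else if k \<le> 2*L then 3*L - k else k)"
definition nv :: "nat \<Rightarrow> nat \<Rightarrow> int" where
  "nv L k = (if k < L then int k - int L else int (2*L) - int k)"
definition al :: "nat \<Rightarrow> (int\<Rightarrow>real) \<Rightarrow> nat \<Rightarrow> real" where
  "al L a k = (if nv L k < 0 then a (nv L k) else a (nv L k - 1))"
definition rr :: "nat \<Rightarrow> (int\<Rightarrow>real) \<Rightarrow> nat \<Rightarrow> real" where
  "rr L p k = (if nv L k < 0 then 1/(p (nv L k - 1))^2 else 1/(p (nv L k + 1))^2)"

lemma idx_sg: "k \<le> 2*L \<Longrightarrow> idx L (sg L k) = nv L k"
  by (auto simp: idx_def sg_def nv_def)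

lemma Jf_pos:
  assumes L: "L \<ge> 1" and k: "k \<le> 2*L" and m: "m \<le> 2*L"
  shows "Jf a p (nv L k) (nv L m) = (if m = 2*L then 1 else if k = 2*L then
     (if m = L-1 then a(-1)/(p(-1))^2 else if m = 2*L-1 then a 0/(p 1)^2 else 0)
     else if m = k then - al L a k else if m + 1 = k \<and> k \<noteq> L then rr L p k * al L a (k-1) else 0)"
proof -
  consider "k < L" | "L \<le> k" "k < 2*L" | "k = 2*L" using k by linarith
  then show ?thesis
  proof cases
    case 1
    then show ?thesis using L m
      by (auto simp: Jf_def nv_def al_def rr_def of_nat_diff)
  next
    case 2
    then show ?thesis using L m
      by (auto simp: Jf_def nv_def al_def rr_def of_nat_diff)
  next
    case 3
    then show ?thesis using L m
      by (auto simp: Jf_def nv_def al_def rr_def of_nat_diff)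
  qed
qed


lemma det_conj_perm:
  fixes A :: "'a :: comm_ring_1 mat"
  assumes A: "A \<in> carrier_mat n n" and p: "p permutes {0..<n}"
  shows "det (mat n n (\<lambda>(i,j). A $$ (p i, p j))) = det A"
proof -
  define R where "R = mat n n (\<lambda>(i,j). A $$ (p i, j))"
  have pn: "i < n \<Longrightarrow> p i < n" for i using p by (simp add: permutes_in_image)
  have dR: "det R = signof p * det A" unfolding R_def by (rule Determinant.det_permute_rows[OF A p])
  have R: "R \<in> carrier_mat n n" unfolding R_def by simp
  have RT: "transpose_mat R \<in> carrier_mat n n" using R by simp
  have eq: "transpose_mat (mat n n (\<lambda>(i,j). A $$ (p i, p j))) = mat n n (\<lambda>(i,j). transpose_mat R $$ (p i, j))"
    by (rule eq_matI, auto simp: R_def pn)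
  have "det (mat n n (\<lambda>(i,j). A $$ (p i, p j))) = det (transpose_mat (mat n n (\<lambda>(i,j). A $$ (p i, p j))))"
    using Determinant.det_transpose[of "mat n n (\<lambda>(i,j). A $$ (p i, p j))" n] by simp
  also have "\<dots> = signof p * det (transpose_mat R)" unfolding eq by (rule Determinant.det_permute_rows[OF RT p])
  also have "det (transpose_mat R) = det R" by (rule Determinant.det_transpose[OF R])
  finally have "det (mat n n (\<lambda>(i,j). A $$ (p i, p j))) = (of_int (sign p * sign p)) * det A"
    unfolding dR by (simp only: of_int_mult ac_simps)
  moreover have "(of_int (sign p * sign p) :: 'a) = 1" by simp
  ultimately show ?thesis by simp
qed

lemma sg_permutes: "sg L permutes {0..<2*L+1}"
proof -
  have inv: "sg L (sg L k) = k" for k by (auto simp: sg_def)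
  show ?thesis unfolding permutes_def
  proof (intro conjI allI impI)
    fix x assume "x \<notin> {0..<2*L+1}" then show "sg L x = x" by (auto simp: sg_def)
  next
    fix y show "\<exists>!x. sg L x = y"
      by (rule ex1I[of _ "sg L y"], simp add: inv, metis inv)
  qed
qed


fun sv :: "nat \<Rightarrow> (int \<Rightarrow> real) \<Rightarrow> nat \<Rightarrow> real" where
  "sv L p 0 = 1"
| "sv L p (Suc k) = 1 + (if Suc k = L then 0 else rr L p (Suc k) * sv L p k)"

lemma sv_ge1: "sv L p k \<ge> 1"
  by (induction k) (auto simp: rr_def intro!: mult_nonneg_nonneg order.trans[of 0 1])

lemma sum2:
  fixes A B :: real
  assumes "finite S" "x \<in> S" "y \<in> S" "x \<noteq> y"
  shows "(\<Sum>i\<in>S. (if i = x then A else if i = y then B else 0)) = A + B"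
proof -
  have "(\<Sum>i\<in>S. (if i = x then A else if i = y then B else 0)) =
        (\<Sum>i\<in>S. (if i = x then A else 0) + (if i = y then B else 0))"
    by (rule sum.cong, insert assms, auto)
  also have "\<dots> = A + B" using assms by (simp add: sum.distrib)
  finally show ?thesis .
qed

lemma sum3:
  fixes A B C :: real
  assumes "finite S" "x \<in> S" "y \<in> S" "z \<in> S" "x \<noteq> y" "x \<noteq> z" "y \<noteq> z"
  shows "(\<Sum>i\<in>S. (if i = x then A else if i = y then B else if i = z then C else 0)) = A + B + C"
proof -
  have "(\<Sum>i\<in>S. (if i = x then A else if i = y then B else if i = z then C else 0)) =
        (\<Sum>i\<in>S. (if i = x then A else 0) + (if i = y then B else 0) + (if i = z then C else 0))"
    by (rule sum.cong, insert assms, auto)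
  also have "\<dots> = A + B + C" using assms by (simp add: sum.distrib)
  finally show ?thesis .
qed

lemma det_J_formula:
  assumes L: "L \<ge> 1"
    and apos: "\<And>n. - int L - 1 \<le> n \<Longrightarrow> n \<le> int L \<Longrightarrow> a n > 0"
    and pm: "\<And>k. - int L \<le> k \<Longrightarrow> k \<le> int L \<Longrightarrow> k \<noteq> 0 \<Longrightarrow> p k \<noteq> 0"
  shows "\<bar>det (jac_FL L a p)\<bar> = (\<Prod>k<2*L. al L a k) *
     (1 + sv L p (L-1) / (p (-1))^2 + sv L p (2*L-1) / (p 1)^2)"
proof -
  define N where "N = 2*L+1"
  define J where "J = jac_FL L a p"
  define J' where "J' = mat N N (\<lambda>(i,j). J $$ (sg L i, sg L j))"
  have Jc: "J \<in> carrier_mat N N" unfolding J_def N_def jac_FL_def by simp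
  have sgN: "k < N \<Longrightarrow> sg L k < N" for k unfolding N_def sg_def by auto
  have dJ': "det J' = det J" unfolding J'_def
    by (rule det_conj_perm[OF Jc], unfold N_def, rule sg_permutes)
  have alpos: "k < 2*L \<Longrightarrow> al L a k > 0" for k
    by (auto simp: al_def nv_def intro!: apos)
  define Kf where "Kf k m = (if m = 2*L then 1 else if k = 2*L then
     (if m = L-1 then a(-1)/(p(-1))^2 else if m = 2*L-1 then a 0/(p 1)^2 else 0)
     else if m = k then - al L a k else if m + 1 = k \<and> k \<noteq> L then rr L p k * al L a (k-1) else 0)" for k m
  have J'e: "J' $$ (k,m) = Kf k m" if "k < N" "m < N" for k m
  proof -
    have "J' $$ (k,m) = J $$ (sg L k, sg L m)" using that by (simp add: J'_def)
    also have "\<dots> = Jf a p (idx L (sg L k)) (idx L (sg L m))"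
      unfolding J_def by (rule jac_entry, insert sgN that pm, auto simp: N_def)
    also have "\<dots> = Jf a p (nv L k) (nv L m)" using that by (simp add: idx_sg N_def)
    also have "\<dots> = Kf k m" unfolding Kf_def by (rule Jf_pos, insert L that, auto simp: N_def)
    finally show ?thesis .
  qed
  define c where "c k = (if k = 2*L then 1 else sv L p k / al L a k)" for k
  define C where "C = mat N N (\<lambda>(i,j). if i = j then 1 else if j = 2*L then c i else (0::real))"
  have Cc: "C \<in> carrier_mat N N" unfolding C_def by simp
  have J'c: "J' \<in> carrier_mat N N" unfolding J'_def by simp
  have dC: "det C = 1"
  proof -
    have "det C = prod_list (diag_mat C)"
      by (rule det_upper_triangular[OF _ Cc], auto simp: C_def N_def)
    also have "\<dots> = 1" unfolding prod_list_diag_prod by (rule prod.neutral, auto simp: C_def)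
    finally show ?thesis .
  qed
  define T where "T = J' * C"
  have Tc: "T \<in> carrier_mat N N" unfolding T_def using J'c Cc by simp
  have dT: "det T = det J" unfolding T_def using Determinant.det_mult[OF J'c Cc] dC dJ' by simp
  have Te: "T $$ (k,m) = (\<Sum>i<N. Kf k i * C $$ (i,m))" if "k < N" "m < N" for k m
    using that J'c Cc J'e unfolding T_def
    by (auto simp: scalar_prod_def atLeast0LessThan intro!: sum.cong)
  have T1: "T $$ (k,m) = Kf k m" if "k < N" "m < N" "m \<noteq> 2*L" for k m
  proof -
    have "T $$ (k,m) = (\<Sum>i<N. (if i = m then Kf k m else 0))"
      unfolding Te[OF that(1,2)] by (rule sum.cong, insert that, auto simp: C_def)
    also have "\<dots> = Kf k m" using that by simp
    finally show ?thesis .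
  qed
  have T2: "T $$ (k,2*L) = 0" if "k < 2*L" for k
  proof -
    have kN: "k < N" "2*L < N" using that by (auto simp: N_def)
    have cC: "C $$ (i, 2*L) = c i" if "i < N" for i using that by (auto simp: C_def c_def N_def)
    have "T $$ (k,2*L) = (\<Sum>i<N. Kf k i * c i)"
      unfolding Te[OF kN] by (rule sum.cong, auto simp: cC)
    also have "\<dots> = 0"
    proof (cases "k \<noteq> 0 \<and> k \<noteq> L")
      case True
      have "(\<Sum>i<N. Kf k i * c i) = (\<Sum>i<N. (if i = 2*L then 1 else if i = k then - al L a k * c k
         else if i = k - 1 then rr L p k * al L a (k-1) * c (k-1) else 0))"
        by (rule sum.cong, insert True that, auto simp: Kf_def c_def)
      also have "\<dots> = 1 + (- al L a k * c k) + rr L p k * al L a (k-1) * c (k-1)"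
        by (rule sum3, insert True that, auto simp: N_def)
      also have "\<dots> = 0"
      proof -
        obtain k' where k': "k = Suc k'" using True by (cases k) auto
        have "al L a k \<noteq> 0" "al L a k' \<noteq> 0" using alpos[of k] alpos[of k'] that k' by auto
        then show ?thesis using True that k' by (simp add: c_def)
      qed
      finally show ?thesis .
    next
      case False
      have "(\<Sum>i<N. Kf k i * c i) = (\<Sum>i<N. (if i = 2*L then 1 else if i = k then - al L a k * c k
         else 0))"
        by (rule sum.cong, insert False that, auto simp: Kf_def c_def)
      also have "\<dots> = 1 + (- al L a k * c k)"
        by (rule sum2, insert that, auto simp: N_def)
      also have "\<dots> = 0"
      proof -
        have "al L a k \<noteq> 0" using alpos[of k] that by auto
        moreover have "sv L p k = 1" using False L by (cases k) auto
        ultimately show ?thesis using that by (simp add: c_def)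
      qed
      finally show ?thesis .
    qed
    finally show ?thesis .
  qed
  define d where "d = 1 + sv L p (L-1) / (p (-1))^2 + sv L p (2*L-1) / (p 1)^2"
  have T3: "T $$ (2*L,2*L) = d"
  proof -
    have kN: "2*L < N" by (auto simp: N_def)
    have cC: "C $$ (i, 2*L) = c i" if "i < N" for i using that by (auto simp: C_def c_def N_def)
    have "T $$ (2*L,2*L) = (\<Sum>i<N. Kf (2*L) i * c i)"
      unfolding Te[OF kN kN] by (rule sum.cong, auto simp: cC)
    also have "\<dots> = (\<Sum>i<N. (if i = 2*L then 1 else if i = L-1 then a(-1)/(p(-1))^2 * c (L-1)
         else if i = 2*L-1 then a 0/(p 1)^2 * c (2*L-1) else 0))"
      by (rule sum.cong, auto simp: Kf_def c_def)
    also have "\<dots> = 1 + a(-1)/(p(-1))^2 * c (L-1) + a 0/(p 1)^2 * c (2*L-1)"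
      by (rule sum3, insert L, auto simp: N_def)
    also have "\<dots> = d"
    proof -
      have e1: "al L a (L-1) = a (-1)" using L by (auto simp: al_def nv_def)
      have e2: "al L a (2*L-1) = a 0" using L by (auto simp: al_def nv_def)
      have "a (-1) > 0" "a 0 > 0" using apos[of "-1"] apos[of 0] L by auto
      then show ?thesis using L unfolding d_def c_def e1 e2 by auto
    qed
    finally show ?thesis .
  qed
  have lt: "T $$ (k,m) = 0" if "k < m" "m < N" for k m
  proof (cases "m = 2*L")
    case True then show ?thesis using T2 that by auto
  next
    case False
    then show ?thesis using T1[of k m] that by (auto simp: Kf_def N_def)
  qed
  have "det T = prod_list (diag_mat T)"
    by (rule det_lower_triangular[OF lt Tc])
  also have "\<dots> = (\<Prod>k\<in>{0..<N}. T $$ (k,k))" unfolding prod_list_diag_prod using Tc by simp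
  also have "{0..<N} = insert (2*L) {..<2*L}" by (auto simp: N_def)
  also have "(\<Prod>k\<in>insert (2*L) {..<2*L}. T $$ (k,k)) = d * (\<Prod>k<2*L. - al L a k)"
    by (subst prod.insert, auto simp: T3 intro!: prod.cong, subst T1, auto simp: N_def Kf_def)
  finally have "det J = d * (\<Prod>k<2*L. - al L a k)" using dT by simp
  moreover have "d > 0" unfolding d_def using sv_ge1[of L p]
    by (intro add_pos_nonneg divide_nonneg_nonneg) (auto intro: order.trans[of 0 1])
  moreover have "\<bar>\<Prod>k<2*L. - al L a k\<bar> = (\<Prod>k<2*L. al L a k)"
    unfolding abs_prod by (rule prod.cong, auto dest!: alpos)
  ultimately show ?thesis unfolding J_def d_def
    by (simp add: abs_mult)
qed


lemma sum_int_conv: "(\<Sum>j = 1..int L. g j) = (\<Sum>j = 1..L. g (int j))"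
proof -
  have "(\<Sum>j = 1..L. g (int j)) = sum g (int ` {1..L})"
    by (rule sum.reindex[symmetric, unfolded o_def], simp)
  then show ?thesis by (simp add: image_int_atLeastAtMost)
qed

lemma prod_int_conv: "(\<Prod>j = 1..int L. g j) = (\<Prod>j = 1..L. g (int j))"
proof -
  have "(\<Prod>j = 1..L. g (int j)) = prod g (int ` {1..L})"
    by (rule prod.reindex[symmetric, unfolded o_def], simp)
  then show ?thesis by (simp add: image_int_atLeastAtMost)
qed

definition Hs :: "(nat \<Rightarrow> real) \<Rightarrow> nat \<Rightarrow> nat \<Rightarrow> real" where
  "Hs y L t = (\<Sum>j = t..L. \<Prod>i = Suc t..j. y i)"

lemma Hs_L: "Hs y L L = 1" by (simp add: Hs_def)

lemma Hs_rec: assumes "t < L" shows "Hs y L t = 1 + y (Suc t) * Hs y L (Suc t)"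
proof -
  have "Hs y L t = (\<Prod>i = Suc t..t. y i) + (\<Sum>j = Suc t..L. \<Prod>i = Suc t..j. y i)"
    unfolding Hs_def using assms by (subst sum.atLeast_Suc_atMost, auto)
  also have "(\<Sum>j = Suc t..L. \<Prod>i = Suc t..j. y i) = (\<Sum>j = Suc t..L. y (Suc t) * (\<Prod>i = Suc (Suc t)..j. y i))"
    by (rule sum.cong, simp, subst prod.atLeast_Suc_atMost, auto)
  finally show ?thesis unfolding Hs_def by (simp add: sum_distrib_left)
qed

lemma Hs_1: "y 1 * Hs y L 1 = (\<Sum>j = 1..L. \<Prod>i = 1..j. y i)"
  unfolding Hs_def sum_distrib_left
  by (rule sum.cong, simp, subst (2) prod.atLeast_Suc_atMost, auto)

lemma chain1:
  assumes "k < L"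
  shows "sv L p k = Hs (\<lambda>i. 1 / (p (- int i))^2) L (L - k)"
  using assms
proof (induction k)
  case 0 then show ?case by (simp add: Hs_L)
next
  case (Suc k)
  have "sv L p (Suc k) = 1 + rr L p (Suc k) * sv L p k" using Suc.prems by simp
  also have "rr L p (Suc k) = 1 / (p (- int (L - k)))^2"
    using Suc.prems by (simp add: rr_def nv_def of_nat_diff algebra_simps)
  also have "sv L p k = Hs (\<lambda>i. 1 / (p (- int i))^2) L (L - k)" using Suc by simp
  also have "1 + 1 / (p (- int (L - k)))^2 * Hs (\<lambda>i. 1 / (p (- int i))^2) L (L - k)
     = Hs (\<lambda>i. 1 / (p (- int i))^2) L (L - Suc k)"
    using Hs_rec[of "L - Suc k" L "\<lambda>i. 1 / (p (- int i))^2"] Suc.prems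
    by (simp add: Suc_diff_Suc)
  finally show ?case .
qed

lemma chain2:
  assumes "L \<ge> 1" "i < L"
  shows "sv L p (L + i) = Hs (\<lambda>i. 1 / (p (int i))^2) L (L - i)"
  using assms(2)
proof (induction i)
  case 0
  have "sv L p L = 1" using assms(1) by (cases L) auto
  then show ?case by (simp add: Hs_L)
next
  case (Suc i)
  have "sv L p (L + Suc i) = 1 + rr L p (L + Suc i) * sv L p (L + i)" by simp
  also have "rr L p (L + Suc i) = 1 / (p (int (L - i)))^2"
    using Suc.prems by (simp add: rr_def nv_def of_nat_diff algebra_simps)
  also have "sv L p (L + i) = Hs (\<lambda>i. 1 / (p (int i))^2) L (L - i)" using Suc by simp
  also have "1 + 1 / (p (int (L - i)))^2 * Hs (\<lambda>i. 1 / (p (int i))^2) L (L - i)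
     = Hs (\<lambda>i. 1 / (p (int i))^2) L (L - Suc i)"
    using Hs_rec[of "L - Suc i" L "\<lambda>i. 1 / (p (int i))^2"] Suc.prems
    by (simp add: Suc_diff_Suc)
  finally show ?case .
qed

lemma ident_neg:
  assumes "L \<ge> 1"
  shows "sv L p (L-1) / (p (-1))^2 = (\<Sum>j = 1..int L. \<Prod>i = 1..j. 1 / (p (- i))\<^sup>2)"
proof -
  have "sv L p (L-1) = Hs (\<lambda>i. 1 / (p (- int i))^2) L 1"
    using chain1[of "L-1" L p] assms by simp
  then have "sv L p (L-1) / (p (-1))^2 = (\<lambda>i. 1 / (p (- int i))^2) 1 * Hs (\<lambda>i. 1 / (p (- int i))^2) L 1"
    by simp
  also have "\<dots> = (\<Sum>j = 1..L. \<Prod>i = 1..j. 1 / (p (- int i))^2)" by (rule Hs_1)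
  finally show ?thesis by (simp add: sum_int_conv prod_int_conv)
qed

lemma ident_pos:
  assumes "L \<ge> 1"
  shows "sv L p (2*L-1) / (p 1)^2 = (\<Sum>j = 1..int L. \<Prod>i = 1..j. 1 / (p i)\<^sup>2)"
proof -
  have "sv L p (2*L-1) = Hs (\<lambda>i. 1 / (p (int i))^2) L 1"
    using chain2[of L "L-1" p] assms by (simp add: mult_2)
  then have "sv L p (2*L-1) / (p 1)^2 = (\<lambda>i. 1 / (p (int i))^2) 1 * Hs (\<lambda>i. 1 / (p (int i))^2) L 1"
    by simp
  also have "\<dots> = (\<Sum>j = 1..L. \<Prod>i = 1..j. 1 / (p (int i))^2)" by (rule Hs_1)
  finally show ?thesis by (simp add: sum_int_conv prod_int_conv)
qed

lemma ident_prod: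
  assumes "L \<ge> 1"
  shows "(\<Prod>k<2*L. al L a k) = (\<Prod>n = - int L..int L - 1. a n)"
proof (rule prod.reindex_bij_witness[where j = "\<lambda>k. if k < L then int k - int L else int (2*L) - int k - 1"
      and i = "\<lambda>n. if n < 0 then nat (n + int L) else nat (int (2*L) - 1 - n)"])
qed (auto simp: al_def nv_def)


lemma eig_row:
  assumes L: "L \<ge> 1"
    and ev: "eigenvector (tridiag L a b) (vec (2 * L + 1) (\<lambda>i. u (idx L i))) E"
    and n: "- int L \<le> n" "n \<le> int L"
  shows "b n * u n + (if n < int L then a n * u (n+1) else 0) + (if n > - int L then a (n-1) * u (n-1) else 0) = E * u n"
proof -
  define N where "N = 2*L+1"
  define i where "i = nat (n + int L)"
  have i: "i < N" "idx L i = n" using n unfolding i_def N_def idx_def by auto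
  have eq: "tridiag L a b *\<^sub>v vec N (\<lambda>i. u (idx L i)) = E \<cdot>\<^sub>v vec N (\<lambda>i. u (idx L i))"
    using ev unfolding eigenvector_def N_def by (simp add: tridiag_def)
  have "(tridiag L a b *\<^sub>v vec N (\<lambda>i. u (idx L i))) $ i = E * u n"
    unfolding eq using i by simp
  moreover have "(tridiag L a b *\<^sub>v vec N (\<lambda>i. u (idx L i))) $ i =
      (\<Sum>j<N. tridiag L a b $$ (i,j) * u (idx L j))"
    using i by (simp add: tridiag_def N_def scalar_prod_def atLeast0LessThan)
  moreover have "(\<Sum>j<N. tridiag L a b $$ (i,j) * u (idx L j)) =
     b n * u n + (if n < int L then a n * u (n+1) else 0) + (if n > - int L then a (n-1) * u (n-1) else 0)"
  proof -
    have ent: "tridiag L a b $$ (i,j) * u (idx L j) = (if j = i then b n * u n else if j = i + 1 then a n * u (n+1)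
      else if j + 1 = i then a (n-1) * u (n-1) else 0)" if "j < N" for j
    proof -
      have "j = i + 1 \<Longrightarrow> idx L j = n + 1" "j + 1 = i \<Longrightarrow> idx L j = n - 1" "j = i \<Longrightarrow> idx L j = n"
        using i by (auto simp: idx_def)
      then show ?thesis using that i by (auto simp: tridiag_def N_def)
    qed
    consider "n = - int L" | "n = int L" | "- int L < n" "n < int L" using n by linarith
    then show ?thesis
    proof cases
      case 1
      then have "i = 0" using i unfolding idx_def by auto
      have "(\<Sum>j<N. tridiag L a b $$ (i,j) * u (idx L j)) = (\<Sum>j<N. (if j = i then b n * u n else if j = i + 1 then a n * u (n+1) else 0))"
        by (rule sum.cong, simp, subst ent, auto simp: \<open>i = 0\<close>)
      also have "\<dots> = b n * u n + a n * u (n+1)" by (rule sum2, insert L \<open>i = 0\<close>, auto simp: N_def)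
      finally show ?thesis using 1 L by auto
    next
      case 2
      then have "i = 2*L" using i unfolding idx_def by auto
      have "(\<Sum>j<N. tridiag L a b $$ (i,j) * u (idx L j)) = (\<Sum>j<N. (if j = i then b n * u n else if j = i - 1 then a (n-1) * u (n-1) else 0))"
        by (rule sum.cong, simp, subst ent, insert L, auto simp: \<open>i = 2*L\<close> N_def)
      also have "\<dots> = b n * u n + a (n-1) * u (n-1)" by (rule sum2, insert L \<open>i = 2*L\<close>, auto simp: N_def)
      finally show ?thesis using 2 L by auto
    next
      case 3
      then have "0 < i" "i < 2*L" using i unfolding idx_def by auto
      have "(\<Sum>j<N. tridiag L a b $$ (i,j) * u (idx L j)) = (\<Sum>j<N. (if j = i then b n * u n else if j = i + 1 then a n * u (n+1)
            else if j = i - 1 then a (n-1) * u (n-1) else 0))"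
        by (rule sum.cong, simp, subst ent, insert \<open>0 < i\<close>, auto)
      also have "\<dots> = b n * u n + a n * u (n+1) + a (n-1) * u (n-1)"
        by (rule sum3, insert \<open>0 < i\<close> \<open>i < 2*L\<close>, auto simp: N_def)
      finally show ?thesis using 3 by auto
    qed
  qed
  ultimately show ?thesis by simp
qed


lemma tele_pos:
  fixes u p :: "int \<Rightarrow> real"
  assumes pu: "\<forall>n\<in>{1..int L}. p n = u (n - 1) / u n"
    and un: "\<forall>n\<in>{- int L..int L}. u n \<noteq> 0"
    and j: "j \<le> L"
  shows "(\<Prod>i = 1..j. 1 / (p (int i))^2) = (u (int j))^2 / (u 0)^2"
  using j
proof (induction j)
  case 0
  have "u 0 \<noteq> 0" using un by simp
  then have "(u 0)^2 \<noteq> 0" by simp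
  then show ?case by simp
next
  case (Suc j)
  have "(\<Prod>i = 1..Suc j. 1 / (p (int i))^2) = (\<Prod>i = 1..j. 1 / (p (int i))^2) * (1 / (p (int (Suc j)))^2)"
    by (simp add: prod.cl_ivl_Suc)
  also have "p (int (Suc j)) = u (int (Suc j) - 1) / u (int (Suc j))" by (rule bspec[OF pu], insert Suc.prems, auto)
  also have "(\<Prod>i = 1..j. 1 / (p (int i))^2) = (u (int j))^2 / (u 0)^2" using Suc by simp
  finally have eq: "(\<Prod>i = 1..Suc j. 1 / (p (int i))^2) = (u (int j))\<^sup>2 / (u 0)\<^sup>2 * (1 / (u (int (Suc j) - 1) / u (int (Suc j)))^2)" .
  have nz: "u (int j) \<noteq> 0" "u 0 \<noteq> 0" using un Suc.prems by auto
  show ?case unfolding eq using nz by (simp add: field_simps power2_eq_square)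
qed

lemma tele_neg:
  fixes u p :: "int \<Rightarrow> real"
  assumes pu: "\<forall>n\<in>{- int L..-1}. p n = u (n + 1) / u n"
    and un: "\<forall>n\<in>{- int L..int L}. u n \<noteq> 0"
    and j: "j \<le> L"
  shows "(\<Prod>i = 1..j. 1 / (p (- int i))^2) = (u (- int j))^2 / (u 0)^2"
  using j
proof (induction j)
  case 0
  have "u 0 \<noteq> 0" using un by simp
  then have "(u 0)^2 \<noteq> 0" by simp
  then show ?case by simp
next
  case (Suc j)
  have "(\<Prod>i = 1..Suc j. 1 / (p (- int i))^2) = (\<Prod>i = 1..j. 1 / (p (- int i))^2) * (1 / (p (- int (Suc j)))^2)"
    by (simp add: prod.cl_ivl_Suc)
  also have "p (- int (Suc j)) = u (- int (Suc j) + 1) / u (- int (Suc j))" by (rule bspec[OF pu], insert Suc.prems, auto)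
  also have "(\<Prod>i = 1..j. 1 / (p (- int i))^2) = (u (- int j))^2 / (u 0)^2" using Suc by simp
  finally have eq: "(\<Prod>i = 1..Suc j. 1 / (p (- int i))^2) = (u (- int j))\<^sup>2 / (u 0)\<^sup>2 * (1 / (u (- int (Suc j) + 1) / u (- int (Suc j)))^2)" .
  have nz: "u (- int j) \<noteq> 0" "u 0 \<noteq> 0" using un Suc.prems by auto
  show ?case unfolding eq using nz by (simp add: field_simps power2_eq_square)
qed

lemma split_sum_sym:
  "(\<Sum>n = - int L..int L. f n) = f 0 + (\<Sum>j = 1..L. f (int j)) + (\<Sum>j = 1..L. f (- int j))"
proof -
  have S: "{- int L..int L} = {0} \<union> (int ` {1..L} \<union> (\<lambda>j. - int j) ` {1..L})"
  proof -
    have *: "x \<in> {0} \<union> (int ` {1..L} \<union> (\<lambda>j. - int j) ` {1..L})" if "x \<in> {- int L..int L}" for x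
    proof (cases "x = 0")
      case False
      show ?thesis
      proof (cases "x > 0")
        case True then show ?thesis using that by (auto intro!: image_eqI[of _ _ "nat x"])
      next
        case F: False then show ?thesis using that False by (auto intro!: image_eqI[of _ _ "nat (-x)"])
      qed
    qed simp
    show ?thesis by (rule equalityI, rule subsetI, erule *, auto)
  qed
  have "(\<Sum>n = - int L..int L. f n) = f 0 + (sum f (int ` {1..L}) + sum f ((\<lambda>j. - int j) ` {1..L}))"
    unfolding S by (subst sum.union_disjoint, auto, subst sum.union_disjoint, auto)
  also have "sum f (int ` {1..L}) = (\<Sum>j = 1..L. f (int j))" by (subst sum.reindex, auto)
  also have "sum f ((\<lambda>j. - int j) ` {1..L}) = (\<Sum>j = 1..L. f (- int j))" by (subst sum.reindex, auto simp: inj_on_def)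
  finally show ?thesis by (simp add: add.assoc)
qed

lemma FL_b:
  assumes L: "L \<ge> 1"
    and ev: "eigenvector (tridiag L a b) (vec (2 * L + 1) (\<lambda>i. u (idx L i))) E"
    and un: "\<forall>n\<in>{- int L..int L}. u n \<noteq> 0"
    and p0: "p 0 = E"
    and pn: "\<forall>n\<in>{- int L..-1}. p n = u (n + 1) / u n"
    and pp: "\<forall>n\<in>{1..int L}. p n = u (n - 1) / u n"
    and n: "- int L \<le> n" "n \<le> int L"
  shows "FL L a p n = b n"
proof -
  have row: "b n * u n + (if n < int L then a n * u (n+1) else 0) + (if n > - int L then a (n-1) * u (n-1) else 0) = E * u n"
    by (rule eig_row[OF L ev n])
  have unn: "u n \<noteq> 0" using un n by auto
  consider "n < 0" | "n = 0" | "n > 0" by linarith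
  then show ?thesis
  proof cases
    case 1
    have e1: "p n = u (n+1) / u n" using pn 1 n by auto
    have e2: "n > - int L \<Longrightarrow> p (n-1) = u n / u (n - 1)" using pn 1 n by auto
    have e3: "n > - int L \<Longrightarrow> u (n-1) \<noteq> 0" using un 1 n by auto
    show ?thesis
    proof (cases "n > - int L")
      case True
      have r: "p 0 * u n = b n * u n + a n * u (n+1) + a (n-1) * u (n-1)" using row True 1 p0 by simp
      have "p 0 = (b n * u n + a n * u (n+1) + a (n-1) * u (n-1)) / u n" using r unn by (simp add: eq_divide_eq)
      also have "\<dots> = b n + a n * (u (n+1) / u n) + a (n-1) * (u (n-1) / u n)" using unn by (simp add: add_divide_distrib)
      finally have "p 0 = b n + a n * (u (n+1) / u n) + a (n-1) * (u (n-1) / u n)" .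
      then show ?thesis using 1 True e3 unn by (simp add: FL_def xinv_def e1 e2)
    next
      case False
      have nn: "n = - int L" using False n by simp
      have r: "p 0 * u n = b n * u n + a n * u (n+1)" using row False 1 p0 L nn by simp
      have "p 0 = (b n * u n + a n * u (n+1)) / u n" using r unn by (simp add: eq_divide_eq)
      also have "\<dots> = b n + a n * (u (n+1) / u n)" using unn by (simp add: add_divide_distrib)
      finally have "p 0 = b n + a n * (u (n+1) / u n)" .
      then show ?thesis using 1 False unn by (simp add: FL_def xinv_def e1)
    qed
  next
    case 2
    have e1: "p (-1) = u 0 / u (-1)" "p 1 = u 0 / u 1" using pn pp L by auto
    have e3: "u (-1) \<noteq> 0" "u 1 \<noteq> 0" using un L by auto
    have r: "p 0 * u 0 = b 0 * u 0 + a 0 * u 1 + a (-1) * u (-1)" using row 2 p0 L by simp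
    have "p 0 = (b 0 * u 0 + a 0 * u 1 + a (-1) * u (-1)) / u 0" using r unn 2 by (simp add: eq_divide_eq)
    also have "\<dots> = b 0 + a 0 * (u 1 / u 0) + a (-1) * (u (-1) / u 0)" using unn 2 by (simp add: add_divide_distrib)
    finally have "p 0 = b 0 + a 0 * (u 1 / u 0) + a (-1) * (u (-1) / u 0)" .
    then show ?thesis using 2 L e3 by (simp add: FL_def xinv_def e1)
  next
    case 3
    have e1: "p n = u (n-1) / u n" using pp 3 n by auto
    have e2: "n < int L \<Longrightarrow> p (n+1) = u n / u (n + 1)" using pp 3 n by auto
    have e3: "n < int L \<Longrightarrow> u (n+1) \<noteq> 0" using un 3 n by auto
    show ?thesis
    proof (cases "n < int L")
      case True
      have r: "p 0 * u n = b n * u n + a n * u (n+1) + a (n-1) * u (n-1)" using row True 3 p0 by simp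
      have "p 0 = (b n * u n + a n * u (n+1) + a (n-1) * u (n-1)) / u n" using r unn by (simp add: eq_divide_eq)
      also have "\<dots> = b n + a n * (u (n+1) / u n) + a (n-1) * (u (n-1) / u n)" using unn by (simp add: add_divide_distrib)
      finally have "p 0 = b n + a n * (u (n+1) / u n) + a (n-1) * (u (n-1) / u n)" .
      then show ?thesis using 3 True e3 unn by (simp add: FL_def xinv_def e1 e2)
    next
      case False
      have nn: "n = int L" using False n by simp
      have r: "p 0 * u n = b n * u n + a (n-1) * u (n-1)" using row False 3 p0 L nn by simp
      have "p 0 = (b n * u n + a (n-1) * u (n-1)) / u n" using r unn by (simp add: eq_divide_eq)
      also have "\<dots> = b n + a (n-1) * (u (n-1) / u n)" using unn by (simp add: add_divide_distrib)
      finally have "p 0 = b n + a (n-1) * (u (n-1) / u n)" .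
      then show ?thesis using 3 False unn by (simp add: FL_def xinv_def e1)
    qed
  qed
qed


lemma part1:
  fixes L :: nat and a :: "int \<Rightarrow> real" and p :: "int \<Rightarrow> real"
  assumes L: "L \<ge> 1"
    and apos: "\<And>n. - int L - 1 \<le> n \<Longrightarrow> n \<le> int L \<Longrightarrow> a n > 0"
    and pm: "\<forall>n\<in>{- int L..int L} - {0}. p n \<noteq> 0"
  shows "\<bar>det (jac_FL L a p)\<bar> =
              (\<Prod>n = - int L..int L - 1. a n) *
              (1 + (\<Sum>j = 1..int L. \<Prod>i = 1..j. 1 / (p i)\<^sup>2)
                 + (\<Sum>j = 1..int L. \<Prod>i = 1..j. 1 / (p (- i))\<^sup>2))"
proof -
  have pm': "\<And>k. - int L \<le> k \<Longrightarrow> k \<le> int L \<Longrightarrow> k \<noteq> 0 \<Longrightarrow> p k \<noteq> 0" using pm by auto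
  have "\<bar>det (jac_FL L a p)\<bar> = (\<Prod>k<2*L. al L a k) *
     (1 + sv L p (L-1) / (p (-1))^2 + sv L p (2*L-1) / (p 1)^2)" by (rule det_J_formula[OF L apos pm'])
  then show ?thesis
    unfolding ident_prod[OF L] ident_neg[OF L] ident_pos[OF L] by (simp add: add_ac)
qed

theorem mainTheorem9:
  fixes L :: nat and a :: "int \<Rightarrow> real"
  assumes L: "L \<ge> 1"
    and apos: "\<And>n. - int L - 1 \<le> n \<Longrightarrow> n \<le> int L \<Longrightarrow> a n > 0"
  shows "(\<forall>p :: int \<Rightarrow> real.
            (\<forall>n\<in>{- int L..int L} - {0}. p n \<noteq> 0) \<longrightarrow>
            \<bar>det (jac_FL L a p)\<bar> =
              (\<Prod>n = - int L..int L - 1. a n) *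
              (1 + (\<Sum>j = 1..int L. \<Prod>i = 1..j. 1 / (p i)\<^sup>2)
                 + (\<Sum>j = 1..int L. \<Prod>i = 1..j. 1 / (p (- i))\<^sup>2)))
       \<and> (\<forall>(u :: int \<Rightarrow> real) (b :: int \<Rightarrow> real) (E :: real) (p :: int \<Rightarrow> real).
            (\<Sum>n = - int L..int L. (u n)\<^sup>2) = 1 \<longrightarrow>
            (\<forall>n\<in>{- int L..int L}. u n \<noteq> 0) \<longrightarrow>
            eigenvector (tridiag L a b) (vec (2 * L + 1) (\<lambda>i. u (idx L i))) E \<longrightarrow>
            p 0 = E \<longrightarrow>
            (\<forall>n\<in>{- int L..-1}. p n = u (n + 1) / u n) \<longrightarrow>
            (\<forall>n\<in>{1..int L}. p n = u (n - 1) / u n) \<longrightarrow>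
            \<bar>det (jac_FL L a p)\<bar> = (\<Prod>n = - int L..int L - 1. a n) * (1 / (u 0)\<^sup>2)
            \<and> (\<forall>n\<in>{- int L..int L}. FL L a p n = b n))"
proof (intro conjI allI impI)
  fix p :: "int \<Rightarrow> real"
  assume "\<forall>n\<in>{- int L..int L} - {0}. p n \<noteq> 0"
  then show "\<bar>det (jac_FL L a p)\<bar> =
              (\<Prod>n = - int L..int L - 1. a n) *
              (1 + (\<Sum>j = 1..int L. \<Prod>i = 1..j. 1 / (p i)\<^sup>2)
                 + (\<Sum>j = 1..int L. \<Prod>i = 1..j. 1 / (p (- i))\<^sup>2))"
    using part1[of L a p, OF L apos] by blast
next
  fix u b :: "int \<Rightarrow> real" and E :: real and p :: "int \<Rightarrow> real"
  assume nrm: "(\<Sum>n = - int L..int L. (u n)\<^sup>2) = 1"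
    and un: "\<forall>n\<in>{- int L..int L}. u n \<noteq> 0"
    and ev: "eigenvector (tridiag L a b) (vec (2 * L + 1) (\<lambda>i. u (idx L i))) E"
    and p0: "p 0 = E"
    and pn: "\<forall>n\<in>{- int L..-1}. p n = u (n + 1) / u n"
    and pp: "\<forall>n\<in>{1..int L}. p n = u (n - 1) / u n"
  show "\<forall>n\<in>{- int L..int L}. FL L a p n = b n"
    using FL_b[OF L ev un p0 pn pp] by auto
  have pm: "\<forall>n\<in>{- int L..int L} - {0}. p n \<noteq> 0"
  proof
    fix n assume n: "n \<in> {- int L..int L} - {0}"
    show "p n \<noteq> 0"
    proof (cases "n < 0")
      case True
      then have "p n = u (n + 1) / u n" "u (n+1) \<noteq> 0" "u n \<noteq> 0" using pn un n by auto
      then show ?thesis by simp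
    next
      case False
      then have "p n = u (n - 1) / u n" "u (n-1) \<noteq> 0" "u n \<noteq> 0" using pp un n by auto
      then show ?thesis by simp
    qed
  qed
  have u0: "u 0 \<noteq> 0" using un by simp
  have S1: "(\<Sum>j = 1..int L. \<Prod>i = 1..j. 1 / (p i)\<^sup>2) = (\<Sum>j = 1..L. (u (int j))^2 / (u 0)^2)"
    unfolding sum_int_conv prod_int_conv
    by (rule sum.cong, simp, rule tele_pos[OF pp un], simp)
  have S2: "(\<Sum>j = 1..int L. \<Prod>i = 1..j. 1 / (p (- i))\<^sup>2) = (\<Sum>j = 1..L. (u (- int j))^2 / (u 0)^2)"
    unfolding sum_int_conv prod_int_conv
    by (rule sum.cong, simp, rule tele_neg[OF pn un], simp)
  have "1 + (\<Sum>j = 1..int L. \<Prod>i = 1..j. 1 / (p i)\<^sup>2) + (\<Sum>j = 1..int L. \<Prod>i = 1..j. 1 / (p (- i))\<^sup>2)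
     = ((u 0)^2 + (\<Sum>j = 1..L. (u (int j))^2) + (\<Sum>j = 1..L. (u (- int j))^2)) / (u 0)^2"
    unfolding S1 S2 using u0 by (simp add: sum_divide_distrib[symmetric] add_divide_distrib)
  also have "(u 0)^2 + (\<Sum>j = 1..L. (u (int j))^2) + (\<Sum>j = 1..L. (u (- int j))^2) = 1"
    using nrm split_sum_sym[of "\<lambda>n. (u n)^2" L] by simp
  finally have "1 + (\<Sum>j = 1..int L. \<Prod>i = 1..j. 1 / (p i)\<^sup>2) + (\<Sum>j = 1..int L. \<Prod>i = 1..j. 1 / (p (- i))\<^sup>2)
     = 1 / (u 0)^2" .
  then show "\<bar>det (jac_FL L a p)\<bar> = (\<Prod>n = - int L..int L - 1. a n) * (1 / (u 0)\<^sup>2)"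
    using part1[OF L apos pm] by simp
qed

end
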